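(* For fixed $p\in(0,1)$ and every $j\ge0$, $$\lim_{K\to\infty}\frac{\mathbb E(W_j)}{K}=\mathbb Q_j\qquad\text{and}\qquad \lim_{K\to\infty}\frac{\mathbb E(W_j^+)}{K}=\sum_{\ell\ge j}\mathbb Q_\ell .$$
   Context: Uniform urn model. Let $v$ be a random variable with values in the positive integers, let $K\ge 1$, let $v_1,\dots,v_K$ be i.i.d. copies of $v$ and $V=v_1+\dots+v_K$. Fix $p\in(0,1)$, with $pV$ assumed to be an integer. Conditionally on $\{v_1,\dots,v_K\}$, $pV$ balls are drawn with replacement, independently, each drawn ball having color $i$ with probability $v_i/V$. Let $\tilde v_i$ be the number of drawn balls of color $i$; $W_j=\sum_{i=1}^K\mathbf 1\{\tilde v_i=j\}$ and $W_j^+=\sum_{i=1}^K\mathbf 1\{\tilde v_i\ge j\}$. Let $\mathbb Q_j=\mathbb E\big(\frac{(pv)^j}{j!}e^{-pv}\big)$. *)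

theory Defs
  imports "HOL-Probability.Probability"
begin

text \<open>The law of v is a pmf D on the naturals (supported on positive
integers). Colours are 0..K-1; vs i is the number of balls of colour i, V their sum.
We draw n = p V balls with replacement, each uniformly among the V balls
(so colour i has probability vs i / V). Under the standing assumption that p V is an integer, the floor is exact.\<close>

definition urn_counts :: "nat pmf \<Rightarrow> real \<Rightarrow> nat \<Rightarrow> (nat \<Rightarrow> nat) pmf" where
  "urn_counts D p K =
     Pi_pmf {..<K} 0 (\<lambda>_. D) \<bind> (\<lambda>vs.
       (let V = (\<Sum>i<K. vs i); n = nat \<lfloor>p * real V\<rfloor> in
        Pi_pmf {..<n} 0 (\<lambda>_. map_pmf fst (pmf_of_set {(i, b). i < K \<and> b < vs i})) \<bind>
          (\<lambda>draws. return_pmf (\<lambda>i. card {t. t < n \<and> draws t = i}))))"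

definition urnW :: "nat \<Rightarrow> nat \<Rightarrow> (nat \<Rightarrow> nat) \<Rightarrow> nat" where
  "urnW K j c = card {i. i < K \<and> c i = j}"

definition urnWplus :: "nat \<Rightarrow> nat \<Rightarrow> (nat \<Rightarrow> nat) \<Rightarrow> nat" where
  "urnWplus K j c = card {i. i < K \<and> c i \<ge> j}"

definition urnQ :: "nat pmf \<Rightarrow> real \<Rightarrow> nat \<Rightarrow> real" where
  "urnQ D p j = measure_pmf.expectation D (\<lambda>v. (p * real v) ^ j / fact j * exp (- (p * real v)))"

end

theory Submission
  imports Defs
begin

lemma poisson_limit:
  fixes v l :: nat and p :: real
  assumes p: "0 < p"
  shows "(\<lambda>V::nat. pmf (binomial_pmf (nat \<lfloor>p * real V\<rfloor>) (min 1 (real v / real V))) l)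
           \<longlonglongrightarrow> (p * real v) ^ l / fact l * exp (- (p * real v))"
proof -
  define n where "n = (\<lambda>V::nat. nat \<lfloor>p * real V\<rfloor>)"
  define q where "q = (\<lambda>V::nat. real v / real V)"
  have q0: "q \<longlonglongrightarrow> 0" unfolding q_def
    by (rule tendsto_divide_0[OF tendsto_const filterlim_at_top_imp_at_infinity[OF filterlim_real_sequentially]])
  have nq: "(\<lambda>V. real (n V) * q V) \<longlonglongrightarrow> p * real v"
  proof (rule tendsto_sandwich[where f="\<lambda>V. p * real v - q V" and h="\<lambda>V. p * real v"])
    show "\<forall>\<^sub>F V in sequentially. p * real v - q V \<le> real (n V) * q V"
      using eventually_ge_at_top[of "1::nat"]
    proof eventually_elim
      case (elim V)
      have fl: "0 \<le> \<lfloor>p * real V\<rfloor>" using p by simp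
      hence "real (n V) = real_of_int \<lfloor>p * real V\<rfloor>" unfolding n_def by simp
      hence "p * real V - 1 \<le> real (n V)" using floor_correct[of "p * real V"] by linarith
      hence "(p * real V - 1) * q V \<le> real (n V) * q V"
        by (intro mult_right_mono) (auto simp: q_def)
      moreover have "(p * real V - 1) * q V = p * real v - q V" using elim
        by (simp add: q_def field_simps)
      ultimately show ?case by simp
    qed
    show "\<forall>\<^sub>F V in sequentially. real (n V) * q V \<le> p * real v"
      using eventually_ge_at_top[of "1::nat"]
    proof eventually_elim
      case (elim V)
      have "real (n V) \<le> p * real V" unfolding n_def using p by simp
      hence "real (n V) * q V \<le> p * real V * q V"
        by (intro mult_right_mono) (auto simp: q_def)
      moreover have "p * real V * q V = p * real v" using elim
        by (simp add: q_def field_simps)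
      ultimately show ?case by simp
    qed
    show "(\<lambda>V. p * real v - q V) \<longlonglongrightarrow> p * real v"
      using tendsto_diff[OF tendsto_const q0] by simp
  qed simp
  have nlarge: "filterlim n at_top sequentially"
  proof -
    have "filterlim (\<lambda>V. p * real V) at_top sequentially"
      using p by (intro filterlim_tendsto_pos_mult_at_top[OF tendsto_const] filterlim_real_sequentially)
    hence "filterlim (\<lambda>V. \<lfloor>p * real V\<rfloor>) at_top sequentially"
      by (rule filterlim_compose[OF filterlim_floor_sequentially])
    thus ?thesis unfolding n_def
      by (rule filterlim_compose[OF filterlim_nat_sequentially])
  qed
  have A: "(\<lambda>V. real (n V choose l) * q V ^ l) \<longlonglongrightarrow> (p * real v) ^ l / fact l"
  proof -
    have eq: "real (n V choose l) * q V ^ l = (\<Prod>i=0..<l. (real (n V) - real i) * q V) / fact l" for V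
    proof -
      have "(\<Prod>i=0..<l. (real (n V) - real i) * q V) = (\<Prod>i=0..<l. real (n V) - real i) * q V ^ l"
        by (simp add: prod.distrib)
      thus ?thesis by (simp add: binomial_gbinomial gbinomial_prod_rev)
    qed
    have li: "(\<lambda>V. (real (n V) - real i) * q V) \<longlonglongrightarrow> p * real v" for i
    proof -
      have "(\<lambda>V. real (n V) * q V - real i * q V) \<longlonglongrightarrow> p * real v - real i * 0"
        by (intro tendsto_diff nq tendsto_mult tendsto_const q0)
      thus ?thesis by (simp add: left_diff_distrib)
    qed
    have "(\<lambda>V. (\<Prod>i=0..<l. (real (n V) - real i) * q V) / fact l) \<longlonglongrightarrow>
            (\<Prod>i=0..<l. p * real v) / fact l"
      by (intro tendsto_divide tendsto_prod li tendsto_const) auto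
    hence "(\<lambda>V. (\<Prod>i=0..<l. (real (n V) - real i) * q V) / fact l) \<longlonglongrightarrow> (p * real v) ^ l / fact l"
      by simp
    thus ?thesis by (simp add: eq)
  qed
  have B: "(\<lambda>V. (1 - q V) ^ l) \<longlonglongrightarrow> 1"
    using tendsto_power[OF tendsto_diff[OF tendsto_const q0], of 1 l] by simp
  have C: "(\<lambda>V. (1 - q V) ^ n V) \<longlonglongrightarrow> exp (- (p * real v))"
  proof -
    have qs: "\<forall>\<^sub>F V in sequentially. 0 \<le> q V \<and> q V \<le> 1/2"
      using eventually_ge_at_top[of "2 * v + 1"]
    proof eventually_elim
      case (elim V)
      hence "real (2 * v) \<le> real V" by linarith
      hence "2 * real v \<le> real V" by simp
      moreover have "real V > 0" using elim by simp
      ultimately show ?case by (simp add: q_def field_simps)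
    qed
    have L: "(\<lambda>V. real (n V) * ln (1 - q V)) \<longlonglongrightarrow> - (p * real v)"
    proof (rule tendsto_sandwich[where f="\<lambda>V. - (real (n V) * q V) - 2 * (real (n V) * q V) * q V"
                                   and h="\<lambda>V. - (real (n V) * q V)"])
      show "\<forall>\<^sub>F V in sequentially. - (real (n V) * q V) - 2 * (real (n V) * q V) * q V
                 \<le> real (n V) * ln (1 - q V)"
        using qs
      proof eventually_elim
        case (elim V)
        have "- q V - 2 * (q V)\<^sup>2 \<le> ln (1 - q V)"
          using elim by (intro ln_one_minus_pos_lower_bound) auto
        hence "real (n V) * (- q V - 2 * (q V)\<^sup>2) \<le> real (n V) * ln (1 - q V)"
          by (intro mult_left_mono) auto
        thus ?case by (simp add: power2_eq_square algebra_simps)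
      qed
      show "\<forall>\<^sub>F V in sequentially. real (n V) * ln (1 - q V) \<le> - (real (n V) * q V)"
        using qs
      proof eventually_elim
        case (elim V)
        have "ln (1 - q V) \<le> (1 - q V) - 1"
          using elim by (intro ln_le_minus_one) auto
        hence "real (n V) * ln (1 - q V) \<le> real (n V) * (- q V)"
          by (intro mult_left_mono) auto
        thus ?case by simp
      qed
      show "(\<lambda>V. - (real (n V) * q V)) \<longlonglongrightarrow> - (p * real v)"
        by (intro tendsto_intros nq)
      show "(\<lambda>V. - (real (n V) * q V) - 2 * (real (n V) * q V) * q V) \<longlonglongrightarrow> - (p * real v)"
        using tendsto_diff[OF tendsto_minus[OF nq] tendsto_mult[OF tendsto_mult[OF tendsto_const nq] q0]]
        by simp
    qed
    have "(\<lambda>V. exp (real (n V) * ln (1 - q V))) \<longlonglongrightarrow> exp (- (p * real v))"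
      by (intro tendsto_intros L)
    moreover have "\<forall>\<^sub>F V in sequentially. exp (real (n V) * ln (1 - q V)) = (1 - q V) ^ n V"
      using qs by eventually_elim (simp add: exp_of_nat_mult)
    ultimately show ?thesis by (rule Lim_transform_eventually)
  qed
  have "(\<lambda>V. real (n V choose l) * q V ^ l * ((1 - q V) ^ n V / (1 - q V) ^ l))
          \<longlonglongrightarrow> (p * real v) ^ l / fact l * (exp (- (p * real v)) / 1)"
    by (intro tendsto_intros A B C) simp
  moreover have "\<forall>\<^sub>F V in sequentially.
      real (n V choose l) * q V ^ l * ((1 - q V) ^ n V / (1 - q V) ^ l) =
      pmf (binomial_pmf (nat \<lfloor>p * real V\<rfloor>) (min 1 (real v / real V))) l"
  proof -
    have e1: "\<forall>\<^sub>F V in sequentially. n V \<ge> l"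
      using nlarge by (simp add: filterlim_at_top)
    have e2: "\<forall>\<^sub>F V in sequentially. V > v" by (rule eventually_gt_at_top)
    show ?thesis using e1 e2
    proof eventually_elim
      case (elim V)
      hence q1: "q V < 1" "0 \<le> q V" by (auto simp: q_def)
      hence "min 1 (real v / real V) = q V" by (simp add: q_def)
      moreover have "(1 - q V) ^ n V / (1 - q V) ^ l = (1 - q V) ^ (n V - l)"
        using q1 elim by (simp add: power_diff)
      ultimately show ?case using q1 by (simp add: n_def)
    qed
  qed
  ultimately show ?thesis using Lim_transform_eventually by fastforce
qed

lemma bern_map:
  "map_pmf (\<lambda>y. y = x) Q = bernoulli_pmf (pmf Q x)"
proof (rule pmf_eqI)
  fix b :: bool
  show "pmf (map_pmf (\<lambda>y. y = x) Q) b = pmf (bernoulli_pmf (pmf Q x)) b"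
  proof (cases b)
    case True
    thus ?thesis by (simp add: pmf_map vimage_def measure_pmf_single pmf_le_1)
  next
    case False
    have "{y. y \<noteq> x} = UNIV - {x}" by auto
    hence "measure Q {y. y \<noteq> x} = 1 - pmf Q x"
      using measure_pmf.prob_compl[of "{x}" Q] by (simp add: measure_pmf_single)
    thus ?thesis using False by (simp add: pmf_map vimage_def pmf_le_1)
  qed
qed

lemma count_binomial:
  "map_pmf (\<lambda>d. card {t. t < n \<and> d t = x}) (Pi_pmf {..<n} dflt (\<lambda>_. Q)) = binomial_pmf n (pmf Q x)"
proof -
  have "binomial_pmf n (pmf Q x) =
     map_pmf (\<lambda>f. card {t\<in>{..<n}. f t}) (Pi_pmf {..<n} (dflt = x) (\<lambda>_. bernoulli_pmf (pmf Q x)))"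
    by (rule binomial_pmf_altdef') (auto simp: pmf_le_1)
  also have "Pi_pmf {..<n} (dflt = x) (\<lambda>_. bernoulli_pmf (pmf Q x))
      = map_pmf (\<lambda>h. (\<lambda>y. y = x) \<circ> h) (Pi_pmf {..<n} dflt (\<lambda>_. Q))"
    using Pi_pmf_map[of "{..<n}" "\<lambda>y. y = x" dflt "dflt = x" "\<lambda>_. Q"]
    by (simp add: bern_map)
  finally show ?thesis by (simp add: pmf.map_comp o_def)
qed

lemma pmf_fst_of_set:
  fixes i K :: nat
  assumes "i < K" "0 < (\<Sum>i<K. vs i)"
  shows "pmf (map_pmf fst (pmf_of_set {(i, b). i < K \<and> b < vs i})) i
         = real (vs i) / real (\<Sum>i<K. (vs i :: nat))"
proof -
  define S where "S = {(i, b). i < K \<and> b < vs i}"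
  have S: "S = Sigma {..<K} (\<lambda>i. {..<vs i})" by (auto simp: S_def)
  have fin: "finite S" unfolding S by (intro finite_SigmaI) auto
  have cS: "card S = (\<Sum>i<K. vs i)" by (simp add: S card_SigmaI)
  have ne: "S \<noteq> {}" using cS assms by auto
  have "S \<inter> fst -` {i} = {i} \<times> {..<vs i}" using assms by (auto simp: S_def)
  hence ci: "card (S \<inter> fst -` {i}) = vs i" by simp
  show ?thesis
    using fin ne ci cS unfolding S_def[symmetric]
    by (simp add: pmf_map measure_pmf_of_set)
qed

lemma coord_inner:
  fixes D :: "nat pmf" and K i :: nat and vs :: "nat \<Rightarrow> nat"
  assumes "i < K" and D: "set_pmf D \<subseteq> {1..}"
    and vs: "vs \<in> set_pmf (Pi_pmf {..<K} 0 (\<lambda>_. D))"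
  shows "Pi_pmf {..<nat \<lfloor>p * real (sum vs {..<K})\<rfloor>} 0
     (\<lambda>_. map_pmf fst (pmf_of_set {(i, b). i < K \<and> b < vs i})) \<bind>
    (\<lambda>x. map_pmf (\<lambda>c. c i)
          (return_pmf
            (\<lambda>i. card {t. t < nat \<lfloor>p * real (sum vs {..<K})\<rfloor> \<and> x t = i}))) =
    binomial_pmf (nat \<lfloor>p * real (sum vs {..<K})\<rfloor>)
     (min 1 (real (vs i) / real (sum vs {..<K})))"
proof -
  have mem: "\<And>l. l < K \<Longrightarrow> vs l \<in> set_pmf D"
    using vs by (auto simp: set_Pi_pmf PiE_dflt_def)
  have "vs i \<le> (\<Sum>i<K. vs i)" using assms by (intro member_le_sum) auto
  moreover have "1 \<le> vs i" using mem[OF assms(1)] D by auto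
  ultimately have pos: "0 < (\<Sum>i<K. vs i)" and le: "real (vs i) / real (\<Sum>i<K. vs i) \<le> 1"
    by (auto simp: divide_le_eq_1 simp del: of_nat_sum)
  show ?thesis
    using count_binomial[where n="nat \<lfloor>p * real (sum vs {..<K})\<rfloor>" and x=i and dflt=0 and
         Q="map_pmf fst (pmf_of_set {(i, b). i < K \<and> b < vs i})"]
    using pmf_fst_of_set[OF assms(1) pos] le
    by (simp add: map_pmf_def[symmetric] pmf.map_comp o_def)
qed

lemma coord_dist:
  fixes D :: "nat pmf" and K i :: nat
  assumes "i < K" and D: "set_pmf D \<subseteq> {1..}"
  shows "map_pmf (\<lambda>c. c i) (urn_counts D p K) =
    Pi_pmf {..<K} 0 (\<lambda>_. D) \<bind> (\<lambda>vs. binomial_pmf (nat \<lfloor>p * real (\<Sum>i<K. vs i)\<rfloor>)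
        (min 1 (real (vs i) / real (\<Sum>i<K. vs i))))"
  unfolding urn_counts_def map_bind_pmf Let_def
  by (intro bind_pmf_cong[OF refl] coord_inner[OF assms])

definition hB :: "real \<Rightarrow> nat \<Rightarrow> nat \<Rightarrow> nat \<Rightarrow> real" where
  "hB p l V v = pmf (binomial_pmf (nat \<lfloor>p * real V\<rfloor>) (min 1 (real v / real V))) l"

definition PP :: "real \<Rightarrow> nat \<Rightarrow> nat \<Rightarrow> real" where
  "PP p l v = (p * real v) ^ l / fact l * exp (- (p * real v))"

definition UU :: "real \<Rightarrow> nat \<Rightarrow> nat \<Rightarrow> nat \<Rightarrow> real" where
  "UU p l K v = (SUP V\<in>{K..}. \<bar>hB p l V v - PP p l v\<bar>)"

lemma hB_bounds: "0 \<le> hB p l V v" "hB p l V v \<le> 1"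
  unfolding hB_def by (rule pmf_nonneg, rule pmf_le_1)

lemma PP_bounds: assumes "0 < p" shows "0 \<le> PP p l v" "PP p l v \<le> 1"
proof -
  show "0 \<le> PP p l v" using assms by (auto simp: PP_def)
  show "PP p l v \<le> 1"
  proof (cases "v = 0")
    case True thus ?thesis by (cases l) (auto simp: PP_def)
  next
    case False
    hence pos: "0 < p * real v" using assms by auto
    have "PP p l v = pmf (poisson_pmf (p * real v)) l"
      using pos by (simp add: PP_def)
    thus ?thesis by (simp add: pmf_le_1)
  qed
qed

lemma diff_le1: assumes "0 < p" shows "\<bar>hB p l V v - PP p l v\<bar> \<le> 1"
  using hB_bounds[of p l V v] PP_bounds[OF assms, of l v] by linarith

lemma UU_upper: assumes "0 < p" "K \<le> V" shows "\<bar>hB p l V v - PP p l v\<bar> \<le> UU p l K v"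
  unfolding UU_def
  by (rule cSUP_upper) (use assms diff_le1[OF assms(1)] in \<open>auto intro!: bdd_aboveI2[where M=1]\<close>)

lemma UU_le1: assumes "0 < p" shows "UU p l K v \<le> 1"
  unfolding UU_def by (rule cSUP_least) (use diff_le1[OF assms] in auto)

lemma UU_nonneg: assumes "0 < p" shows "0 \<le> UU p l K v"
  using UU_upper[OF assms order.refl, where K=K and l=l and v=v] by linarith

lemma UU_tendsto: assumes "0 < p" shows "(\<lambda>K. UU p l K v) \<longlonglongrightarrow> 0"
proof (rule tendstoI)
  fix e :: real assume e: "0 < e"
  have lim: "(\<lambda>V. hB p l V v) \<longlonglongrightarrow> PP p l v"
    unfolding hB_def PP_def by (rule poisson_limit[OF assms])
  have "\<forall>\<^sub>F V in sequentially. dist (hB p l V v) (PP p l v) < e/2"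
    using tendstoD[OF lim, of "e/2"] e by simp
  then obtain N where N: "\<And>V. V \<ge> N \<Longrightarrow> \<bar>hB p l V v - PP p l v\<bar> < e/2"
    by (auto simp: eventually_sequentially dist_real_def)
  show "\<forall>\<^sub>F K in sequentially. dist (UU p l K v) 0 < e"
    unfolding eventually_sequentially
  proof (intro exI allI impI)
    fix K assume K: "N \<le> K"
    have "UU p l K v \<le> e/2" unfolding UU_def
      by (rule cSUP_least) (use N K in \<open>auto intro: less_imp_le\<close>)
    thus "dist (UU p l K v) 0 < e" using UU_nonneg[OF assms, of l K v] e
      by (simp add: dist_real_def)
  qed
qed

lemma delta_tendsto:
  assumes "0 < p"
  shows "(\<lambda>K. measure_pmf.expectation D (UU p l K)) \<longlonglongrightarrow> 0"
proof -
  have "(\<lambda>K. measure_pmf.expectation D (UU p l K)) \<longlonglongrightarrow> measure_pmf.expectation D (\<lambda>_. 0::real)"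
    by (rule integral_dominated_convergence[where w="\<lambda>_. 1"])
       (use UU_tendsto[OF assms] UU_le1[OF assms] UU_nonneg[OF assms] in auto)
  thus ?thesis by simp
qed

lemma coord_bound:
  fixes D :: "nat pmf" and K i l :: nat
  assumes "i < K" and D: "set_pmf D \<subseteq> {1..}" and p: "0 < p"
  shows "\<bar>pmf (map_pmf (\<lambda>c. c i) (urn_counts D p K)) l - urnQ D p l\<bar>
           \<le> measure_pmf.expectation D (UU p l K)"
proof -
  define Pi where "Pi = Pi_pmf {..<K} 0 (\<lambda>_. D)"
  define V where "V = (\<lambda>vs::nat\<Rightarrow>nat. \<Sum>i<K. vs i)"
  have comp: "map_pmf (\<lambda>f. f i) Pi = D"
    using Pi_pmf_component[of "{..<K}" i 0 "\<lambda>_. D"] assms by (simp add: Pi_def)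
  have e1: "pmf (map_pmf (\<lambda>c. c i) (urn_counts D p K)) l =
      measure_pmf.expectation Pi (\<lambda>vs. hB p l (V vs) (vs i))"
    unfolding coord_dist[OF assms(1,2)] pmf_bind hB_def V_def Pi_def by (rule refl)
  have e2: "urnQ D p l = measure_pmf.expectation Pi (\<lambda>vs. PP p l (vs i))"
  proof -
    have "urnQ D p l = measure_pmf.expectation D (PP p l)" unfolding urnQ_def PP_def ..
    also have "\<dots> = measure_pmf.expectation (map_pmf (\<lambda>f. f i) Pi) (PP p l)" by (simp add: comp)
    also have "\<dots> = measure_pmf.expectation Pi (\<lambda>vs. PP p l (vs i))" by simp
    finally show ?thesis .
  qed
  have e3: "measure_pmf.expectation D (UU p l K) = measure_pmf.expectation Pi (\<lambda>vs. UU p l K (vs i))"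
  proof -
    have "measure_pmf.expectation D (UU p l K) = measure_pmf.expectation (map_pmf (\<lambda>f. f i) Pi) (UU p l K)"
      by (simp add: comp)
    also have "\<dots> = measure_pmf.expectation Pi (\<lambda>vs. UU p l K (vs i))" by simp
    finally show ?thesis .
  qed
  have int_h: "integrable Pi (\<lambda>vs. hB p l (V vs) (vs i))"
    by (rule measure_pmf.integrable_const_bound[where B=1]) (auto simp: hB_bounds)
  have int_P: "integrable Pi (\<lambda>vs. PP p l (vs i))"
    by (rule measure_pmf.integrable_const_bound[where B=1]) (use PP_bounds[OF p] in auto)
  have int_U: "integrable Pi (\<lambda>vs. UU p l K (vs i))"
    by (rule measure_pmf.integrable_const_bound[where B=1]) (use UU_le1[OF p] UU_nonneg[OF p] in auto)
  have AE: "AE vs in Pi. \<bar>hB p l (V vs) (vs i) - PP p l (vs i)\<bar> \<le> UU p l K (vs i)"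
    unfolding AE_measure_pmf_iff
  proof
    fix vs assume vs: "vs \<in> set_pmf Pi"
    hence mem: "\<And>l. l < K \<Longrightarrow> vs l \<in> set_pmf D"
      by (auto simp: set_Pi_pmf PiE_dflt_def Pi_def)
    have "K = (\<Sum>l<K. (1::nat))" by simp
    also have "\<dots> \<le> V vs" unfolding V_def
      by (rule sum_mono) (use mem D in force)
    finally show "\<bar>hB p l (V vs) (vs i) - PP p l (vs i)\<bar> \<le> UU p l K (vs i)"
      by (rule UU_upper[OF p])
  qed
  have "\<bar>pmf (map_pmf (\<lambda>c. c i) (urn_counts D p K)) l - urnQ D p l\<bar>
       = norm (measure_pmf.expectation Pi (\<lambda>vs. hB p l (V vs) (vs i) - PP p l (vs i)))"
    unfolding e1 e2 using int_h int_P by simp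
  also have "\<dots> \<le> measure_pmf.expectation Pi (\<lambda>vs. norm (hB p l (V vs) (vs i) - PP p l (vs i)))"
    by (rule integral_norm_bound)
  also have "\<dots> \<le> measure_pmf.expectation Pi (\<lambda>vs. UU p l K (vs i))"
    by (rule integral_mono_AE) (use int_h int_P int_U AE in auto)
  finally show ?thesis unfolding e3 .
qed


lemma avg_tendsto:
  fixes D :: "nat pmf" and l :: nat
  assumes D: "set_pmf D \<subseteq> {1..}" and p: "0 < p"
  shows "(\<lambda>K. (\<Sum>i<K. pmf (map_pmf (\<lambda>c. c i) (urn_counts D p K)) l) / real K) \<longlonglongrightarrow> urnQ D p l"
proof -
  have "(\<lambda>K. (\<Sum>i<K. pmf (map_pmf (\<lambda>c. c i) (urn_counts D p K)) l) / real K - urnQ D p l) \<longlonglongrightarrow> 0"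
  proof (rule Lim_null_comparison[OF _ delta_tendsto[OF p, of D l]])
    show "\<forall>\<^sub>F K in sequentially. norm ((\<Sum>i<K. pmf (map_pmf (\<lambda>c. c i) (urn_counts D p K)) l) / real K - urnQ D p l)
            \<le> measure_pmf.expectation D (UU p l K)"
      using eventually_ge_at_top[of "1::nat"]
    proof eventually_elim
      case (elim K)
      define a where "a = (\<lambda>i. pmf (map_pmf (\<lambda>c. c i) (urn_counts D p K)) l)"
      define d where "d = measure_pmf.expectation D (UU p l K)"
      have Kp: "real K > 0" using elim by simp
      have "(\<Sum>i<K. a i) / real K - urnQ D p l = (\<Sum>i<K. (a i - urnQ D p l)) / real K"
        using Kp by (simp add: sum_subtractf field_simps)
      also have "norm \<dots> = \<bar>\<Sum>i<K. (a i - urnQ D p l)\<bar> / real K" by simp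
      also have "\<dots> \<le> (\<Sum>i<K. \<bar>a i - urnQ D p l\<bar>) / real K"
        using Kp by (intro divide_right_mono sum_abs) auto
      also have "\<dots> \<le> (\<Sum>i<K. d) / real K"
        using Kp unfolding a_def d_def by (intro divide_right_mono sum_mono coord_bound D p) auto
      also have "\<dots> = d" using Kp by simp
      finally show ?case by (simp add: a_def d_def)
    qed
  qed
  thus ?thesis using tendsto_add[OF _ tendsto_const[of "urnQ D p l"]] by fastforce
qed

lemma int_bool:
  fixes M :: "(nat \<Rightarrow> nat) pmf" and i j :: nat
  shows "integrable M (\<lambda>c. of_bool (c i = j) :: real)"
  by (rule measure_pmf.integrable_const_bound[where B=1]) auto

lemma exp_indicator:
  fixes M :: "(nat \<Rightarrow> nat) pmf" and i l :: nat
  shows "measure_pmf.expectation M (\<lambda>c. of_bool (c i = l) :: real) = pmf (map_pmf (\<lambda>c. c i) M) l"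
proof -
  have "(\<lambda>c. of_bool (c i = l) :: real) = indicator {c. c i = l}" by (auto simp: indicator_def)
  thus ?thesis by (simp add: pmf_map vimage_def)
qed

lemma EW:
  fixes M :: "(nat \<Rightarrow> nat) pmf"
  shows "measure_pmf.expectation M (\<lambda>c. real (urnW K j c)) = (\<Sum>i<K. pmf (map_pmf (\<lambda>c. c i) M) j)"
proof -
  have "(\<lambda>c. real (urnW K j c)) = (\<lambda>c. \<Sum>i<K. of_bool (c i = j))"
  proof
    fix c
    have "{i. i < K \<and> c i = j} = {..<K} \<inter> {i. c i = j}" by auto
    thus "real (urnW K j c) = (\<Sum>i<K. of_bool (c i = j))"
      by (simp add: urnW_def sum_of_bool_eq)
  qed
  moreover have "measure_pmf.expectation M (\<lambda>c. \<Sum>i<K. of_bool (c i = j) :: real) =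
     (\<Sum>i<K. measure_pmf.expectation M (\<lambda>c. of_bool (c i = j)))"
    by (rule Bochner_Integration.integral_sum) (rule int_bool)
  ultimately show ?thesis by (simp add: exp_indicator)
qed

lemma int_sumbool:
  fixes M :: "(nat \<Rightarrow> nat) pmf" and i j :: nat
  shows "integrable M (\<lambda>c. \<Sum>l<j. of_bool (c i = l) :: real)"
proof -
  have bnd: "norm (\<Sum>l<j. of_bool (c i = l) :: real) \<le> real j" for c :: "nat \<Rightarrow> nat"
  proof -
    have "(\<Sum>l<j. of_bool (c i = l) :: real) \<le> (\<Sum>l<j. 1)" by (rule sum_mono) auto
    moreover have "0 \<le> (\<Sum>l<j. of_bool (c i = l) :: real)" by (rule sum_nonneg) auto
    ultimately show ?thesis by simp
  qed
  show ?thesis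
    by (rule measure_pmf.integrable_const_bound[where B="real j"]) (use bnd in auto)
qed

lemma exp_one_minus:
  fixes M :: "(nat \<Rightarrow> nat) pmf" and i j :: nat
  shows "measure_pmf.expectation M (\<lambda>c. 1 - (\<Sum>l<j. of_bool (c i = l)) :: real) =
    1 - (\<Sum>l<j. measure_pmf.expectation M (\<lambda>c. of_bool (c i = l)))"
proof -
  have i1: "integrable M (\<lambda>c. \<Sum>l<j. of_bool (c i = l) :: real)" by (rule int_sumbool)
  have "measure_pmf.expectation M (\<lambda>c. 1 - (\<Sum>l<j. of_bool (c i = l)) :: real) =
     measure_pmf.expectation M (\<lambda>c. 1) - measure_pmf.expectation M (\<lambda>c. (\<Sum>l<j. of_bool (c i = l)) :: real)"
    by (rule Bochner_Integration.integral_diff[OF _ i1]) simp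
  also have "measure_pmf.expectation M (\<lambda>c. (\<Sum>l<j. of_bool (c i = l)) :: real) =
     (\<Sum>l<j. measure_pmf.expectation M (\<lambda>c. of_bool (c i = l)))"
    by (rule Bochner_Integration.integral_sum) (rule int_bool)
  finally show ?thesis by simp
qed

lemma EWplus:
  fixes M :: "(nat \<Rightarrow> nat) pmf"
  shows "measure_pmf.expectation M (\<lambda>c. real (urnWplus K j c)) =
     real K - (\<Sum>l<j. \<Sum>i<K. pmf (map_pmf (\<lambda>c. c i) M) l)"
proof -
  have eq1: "(\<lambda>c. real (urnWplus K j c)) = (\<lambda>c. \<Sum>i<K. (1 - (\<Sum>l<j. of_bool (c i = l) :: real)))"
  proof
    fix c :: "nat \<Rightarrow> nat"
    have eq: "(\<Sum>l<j. of_bool (c i = l) :: real) = of_bool (c i < j)" for i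
      by (simp add: sum.delta')
    have "{i. i < K \<and> j \<le> c i} = {..<K} \<inter> {i. \<not> c i < j}" by auto
    thus "real (urnWplus K j c) = (\<Sum>i<K. (1 - (\<Sum>l<j. of_bool (c i = l) :: real)))"
      by (simp add: urnWplus_def eq sum_of_bool_eq[symmetric] of_bool_not_iff)
  qed
  have eq2: "measure_pmf.expectation M (\<lambda>c. \<Sum>i<K. (1 - (\<Sum>l<j. of_bool (c i = l))) :: real) =
     (\<Sum>i<K. measure_pmf.expectation M (\<lambda>c. 1 - (\<Sum>l<j. of_bool (c i = l)) :: real))"
    by (rule Bochner_Integration.integral_sum) (rule Bochner_Integration.integrable_diff[OF measure_pmf.integrable_const int_sumbool])
  have "measure_pmf.expectation M (\<lambda>c. real (urnWplus K j c)) =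
     (\<Sum>i<K. measure_pmf.expectation M (\<lambda>c. 1 - (\<Sum>l<j. of_bool (c i = l)) :: real))"
    unfolding eq1 by (rule eq2)
  also have "\<dots> = (\<Sum>i<K. 1 - (\<Sum>l<j. pmf (map_pmf (\<lambda>c. c i) M) l))"
    by (simp only: exp_one_minus exp_indicator)
  also have "\<dots> = real K - (\<Sum>i<K. \<Sum>l<j. pmf (map_pmf (\<lambda>c. c i) M) l)"
    by (simp add: sum_subtractf)
  also have "(\<Sum>i<K. \<Sum>l<j. pmf (map_pmf (\<lambda>c. c i) M) l) = (\<Sum>l<j. \<Sum>i<K. pmf (map_pmf (\<lambda>c. c i) M) l)"
    by (rule sum.swap)
  finally show ?thesis .
qed

lemma sumQ:
  fixes D :: "nat pmf"
  assumes D: "set_pmf D \<subseteq> {1..}" and p: "0 < p"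
  shows "(\<Sum>l. urnQ D p (l + j)) = 1 - (\<Sum>l<j. urnQ D p l)"
proof -
  define M where "M = D \<bind> (\<lambda>v. poisson_pmf (p * real (max 1 v)))"
  have pM: "pmf M l = urnQ D p l" for l
    unfolding M_def pmf_bind urnQ_def
  proof (rule integral_cong_AE)
    show "AE v in measure_pmf D. pmf (poisson_pmf (p * real (max 1 v))) l =
             (p * real v) ^ l / fact l * exp (- (p * real v))"
      unfolding AE_measure_pmf_iff
    proof
      fix v assume "v \<in> set_pmf D"
      hence v: "1 \<le> v" using D by auto
      hence "max 1 v = v" by simp
      moreover have "0 < p * real v" using v p by simp
      ultimately show "pmf (poisson_pmf (p * real (max 1 v))) l =
             (p * real v) ^ l / fact l * exp (- (p * real v))" by simp
    qed
  qed auto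
  have abs: "Infinite_Set_Sum.abs_summable_on (pmf M) UNIV" by (rule pmf_abs_summable)
  hence summ: "summable (pmf M)"
    unfolding abs_summable_on_nat_iff' using summable_norm_cancel by blast
  have "suminf (pmf M) = 1"
    using infsetsum_nat'[OF abs] infsetsum_pmf_eq_1[of M UNIV] by simp
  hence "(\<Sum>l. pmf M (l + j)) = 1 - (\<Sum>l<j. pmf M l)"
    using suminf_minus_initial_segment[OF summ, of j] by simp
  thus ?thesis by (simp add: pM)
qed

theorem mainTheorem4:
  fixes D :: "nat pmf" and p :: real and j :: nat
  assumes "set_pmf D \<subseteq> {1..}"
    and "0 < p" and "p < 1"
    and "\<forall>n\<in>set_pmf D. p * real n \<in> \<int>"
  shows "((\<lambda>K. measure_pmf.expectation (urn_counts D p K) (\<lambda>c. real (urnW K j c)) / real K)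
           \<longlonglongrightarrow> urnQ D p j) \<and>
         ((\<lambda>K. measure_pmf.expectation (urn_counts D p K) (\<lambda>c. real (urnWplus K j c)) / real K)
           \<longlonglongrightarrow> (\<Sum>l. urnQ D p (l + j)))"
proof
  show "(\<lambda>K. measure_pmf.expectation (urn_counts D p K) (\<lambda>c. real (urnW K j c)) / real K)
           \<longlonglongrightarrow> urnQ D p j"
    unfolding EW by (rule avg_tendsto[OF assms(1,2)])
  have lim: "(\<lambda>K. 1 - (\<Sum>l<j. (\<Sum>i<K. pmf (map_pmf (\<lambda>c. c i) (urn_counts D p K)) l) / real K))
      \<longlonglongrightarrow> 1 - (\<Sum>l<j. urnQ D p l)"
    by (intro tendsto_intros avg_tendsto[OF assms(1,2)])
  have ev: "\<forall>\<^sub>F K in sequentially.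
     1 - (\<Sum>l<j. (\<Sum>i<K. pmf (map_pmf (\<lambda>c. c i) (urn_counts D p K)) l) / real K) =
     measure_pmf.expectation (urn_counts D p K) (\<lambda>c. real (urnWplus K j c)) / real K"
    using eventually_ge_at_top[of "1::nat"]
  proof eventually_elim
    case (elim K)
    hence "real K > 0" by simp
    thus ?case unfolding EWplus sum_divide_distrib[symmetric] by (simp add: field_simps)
  qed
  show "(\<lambda>K. measure_pmf.expectation (urn_counts D p K) (\<lambda>c. real (urnWplus K j c)) / real K)
           \<longlonglongrightarrow> (\<Sum>l. urnQ D p (l + j))"
    unfolding sumQ[OF assms(1,2)] using Lim_transform_eventually[OF lim ev] .
qed

end
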